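(* Let $\Sigma=\{s_1<s_2<\cdots<s_l\}$ be a set of positive integers with $s_1=1$ and $s_i-s_{i-1}\le 2$ for all $i=2,\ldots,l$. Then $\Sigma$ is a $\delta$-set. Furthermore, there is a caterpillar of order $2l$ that admits a distance $\Sigma$-labeling in which every element of $\Sigma$ is the label of exactly two vertices.
   Context: All graphs are finite and simple; $d(u,v)$ denotes the usual graph distance. For a set $J$ of nonnegative integers, a distance $J$-labeling of $G$ is a function $f:V(G)\to J$ with $f(V(G))=J$ such that whenever two distinct vertices $u,v$ satisfy $f(u)=f(v)=k$, we have $d(u,v)=k$. It is proper if every $k\in J\setminus\{0\}$ is the label of at least two vertices. A finite set $\Sigma$ of nonnegative integers is a $\delta$-set if there exists a graph admitting a proper distance $\Sigma$-labeling. A caterpillar is a tree in which the vertices that are not leaves induce a path (possibly empty). *)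

theory Defs
  imports Main "HOL-Library.Extended_Nat"
begin

definition simple_graph :: "'a set \<Rightarrow> ('a \<Rightarrow> 'a \<Rightarrow> bool) \<Rightarrow> bool" where
  "simple_graph V E \<longleftrightarrow> finite V \<and> (\<forall>x y. E x y \<longrightarrow> x \<in> V \<and> y \<in> V)
     \<and> (\<forall>x y. E x y \<longrightarrow> E y x) \<and> (\<forall>x. \<not> E x x)"

definition walk :: "'a set \<Rightarrow> ('a \<Rightarrow> 'a \<Rightarrow> bool) \<Rightarrow> 'a list \<Rightarrow> bool" where
  "walk V E xs \<longleftrightarrow> xs \<noteq> [] \<and> set xs \<subseteq> V \<and> (\<forall>i. Suc i < length xs \<longrightarrow> E (xs ! i) (xs ! Suc i))"

definition gdist :: "'a set \<Rightarrow> ('a \<Rightarrow> 'a \<Rightarrow> bool) \<Rightarrow> 'a \<Rightarrow> 'a \<Rightarrow> enat" where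
  "gdist V E u v =
     (if \<exists>xs. walk V E xs \<and> hd xs = u \<and> last xs = v
      then enat (LEAST n. \<exists>xs. walk V E xs \<and> hd xs = u \<and> last xs = v \<and> length xs = Suc n)
      else \<infinity>)"

definition distance_labeling :: "'a set \<Rightarrow> ('a \<Rightarrow> 'a \<Rightarrow> bool) \<Rightarrow> nat set \<Rightarrow> ('a \<Rightarrow> nat) \<Rightarrow> bool" where
  "distance_labeling V E J f \<longleftrightarrow> f ` V = J \<and>
     (\<forall>u\<in>V. \<forall>v\<in>V. u \<noteq> v \<and> f u = f v \<longrightarrow> gdist V E u v = enat (f u))"

definition proper_distance_labeling :: "'a set \<Rightarrow> ('a \<Rightarrow> 'a \<Rightarrow> bool) \<Rightarrow> nat set \<Rightarrow> ('a \<Rightarrow> nat) \<Rightarrow> bool" where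
  "proper_distance_labeling V E J f \<longleftrightarrow> distance_labeling V E J f \<and>
     (\<forall>k\<in>J - {0}. \<exists>u\<in>V. \<exists>v\<in>V. u \<noteq> v \<and> f u = k \<and> f v = k)"

text \<open>Delta-set: finite set admitting a proper distance labeling of some finite simple graph
  (vertices taken w.l.o.g. as natural numbers).\<close>
definition delta_set :: "nat set \<Rightarrow> bool" where
  "delta_set S \<longleftrightarrow> finite S \<and>
     (\<exists>(V::nat set) E f. simple_graph V E \<and> proper_distance_labeling V E S f)"

definition connected_graph :: "'a set \<Rightarrow> ('a \<Rightarrow> 'a \<Rightarrow> bool) \<Rightarrow> bool" where
  "connected_graph V E \<longleftrightarrow> V \<noteq> {} \<and> (\<forall>u\<in>V. \<forall>v\<in>V. \<exists>xs. walk V E xs \<and> hd xs = u \<and> last xs = v)"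

definition is_cycle :: "'a set \<Rightarrow> ('a \<Rightarrow> 'a \<Rightarrow> bool) \<Rightarrow> 'a list \<Rightarrow> bool" where
  "is_cycle V E xs \<longleftrightarrow> length xs \<ge> 3 \<and> distinct xs \<and> walk V E xs \<and> E (last xs) (hd xs)"

definition is_tree :: "'a set \<Rightarrow> ('a \<Rightarrow> 'a \<Rightarrow> bool) \<Rightarrow> bool" where
  "is_tree V E \<longleftrightarrow> simple_graph V E \<and> connected_graph V E \<and> (\<nexists>xs. is_cycle V E xs)"

definition degree :: "('a \<Rightarrow> 'a \<Rightarrow> bool) \<Rightarrow> 'a \<Rightarrow> nat" where
  "degree E v = card {w. E v w}"

text \<open>The subgraph induced by N is a path (possibly empty): N can be listed without
  repetition so that two vertices of N are adjacent iff they are consecutive.\<close>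
definition induces_path :: "('a \<Rightarrow> 'a \<Rightarrow> bool) \<Rightarrow> 'a set \<Rightarrow> bool" where
  "induces_path E N \<longleftrightarrow> (\<exists>xs. distinct xs \<and> set xs = N \<and>
     (\<forall>i<length xs. \<forall>j<length xs. E (xs ! i) (xs ! j) \<longleftrightarrow> (i = Suc j \<or> j = Suc i)))"

definition caterpillar :: "'a set \<Rightarrow> ('a \<Rightarrow> 'a \<Rightarrow> bool) \<Rightarrow> bool" where
  "caterpillar V E \<longleftrightarrow> is_tree V E \<and> induces_path E {v\<in>V. degree E v \<noteq> 1}"

end

theory Submission
  imports Defs
begin


lemma walk_single: "x \<in> V \<Longrightarrow> walk V E [x]"
  by (simp add: walk_def)

lemma walk_append:
  assumes "walk V E xs" "walk V E ys" "E (last xs) (hd ys)"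
  shows "walk V E (xs @ ys)"
proof -
  have ne: "xs \<noteq> []" "ys \<noteq> []" using assms by (auto simp: walk_def)
  show ?thesis unfolding walk_def
  proof (intro conjI allI impI)
    show "xs @ ys \<noteq> []" using ne by simp
    show "set (xs @ ys) \<subseteq> V" using assms by (auto simp: walk_def)
  next
    fix i assume i: "Suc i < length (xs @ ys)"
    consider "Suc i < length xs" | "Suc i = length xs" | "Suc i > length xs" by linarith
    then show "E ((xs @ ys) ! i) ((xs @ ys) ! Suc i)"
    proof cases
      case 1 then show ?thesis using assms(1) by (simp add: nth_append walk_def)
    next
      case 2
      have "i = length xs - 1" using 2 by simp
      then have "xs ! i = last xs" using ne by (simp add: last_conv_nth)
      moreover have "ys ! 0 = hd ys" using ne by (simp add: hd_conv_nth)
      ultimately show ?thesis using 2 assms(3) by (simp add: nth_append)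
    next
      case 3
      then obtain j where j: "i = length xs + j" by (metis less_Suc_eq_le le_Suc_ex)
      have "Suc j < length ys" using i j by simp
      then have "E (ys ! j) (ys ! Suc j)" using assms(2) by (simp add: walk_def)
      then show ?thesis using j by (simp add: nth_append)
    qed
  qed
qed

lemma walk_rev:
  assumes "walk V E xs" "\<And>x y. E x y \<Longrightarrow> E y x"
  shows "walk V E (rev xs)"
  unfolding walk_def
proof (intro conjI allI impI)
  show "rev xs \<noteq> []" "set (rev xs) \<subseteq> V" using assms by (auto simp: walk_def)
next
  fix i assume i: "Suc i < length (rev xs)"
  define j where "j = length xs - Suc (Suc i)"
  have j: "Suc j < length xs" using i unfolding j_def by simp
  have "E (xs ! j) (xs ! Suc j)" using assms(1) j by (simp add: walk_def)
  moreover have "rev xs ! i = xs ! Suc j" "rev xs ! Suc i = xs ! j"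
    using i by (auto simp: rev_nth j_def Suc_diff_Suc)
  ultimately show "E (rev xs ! i) (rev xs ! Suc i)" using assms(2) by simp
qed

definition cE :: "nat set \<Rightarrow> (nat \<Rightarrow> int) \<Rightarrow> (nat \<Rightarrow> nat) \<Rightarrow> nat \<Rightarrow> nat \<Rightarrow> bool" where
  "cE V pos dep x y \<longleftrightarrow> x \<in> V \<and> y \<in> V \<and> x \<noteq> y \<and>
     ((dep x = 0 \<and> dep y = 0 \<and> \<bar>pos x - pos y\<bar> = 1) \<or> (dep x = 0 \<and> dep y = 1 \<and> pos x = pos y)
      \<or> (dep x = 1 \<and> dep y = 0 \<and> pos x = pos y))"

definition cD :: "(nat \<Rightarrow> int) \<Rightarrow> (nat \<Rightarrow> nat) \<Rightarrow> nat \<Rightarrow> nat \<Rightarrow> nat" where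
  "cD pos dep x y = (if x = y then 0 else nat \<bar>pos x - pos y\<bar> + dep x + dep y)"

locale cat =
  fixes V :: "nat set" and pos :: "nat \<Rightarrow> int" and dep :: "nat \<Rightarrow> nat" and lo hi :: int
  assumes finV: "finite V"
    and lohi: "lo \<le> hi"
    and bnd: "\<And>x. x \<in> V \<Longrightarrow> dep x \<le> 1 \<and> lo \<le> pos x \<and> pos x \<le> hi"
    and ex_sp: "\<And>a. lo \<le> a \<Longrightarrow> a \<le> hi \<Longrightarrow> \<exists>x\<in>V. dep x = 0 \<and> pos x = a"
    and uniq: "\<And>x y. x \<in> V \<Longrightarrow> y \<in> V \<Longrightarrow> dep x = 0 \<Longrightarrow> dep y = 0 \<Longrightarrow> pos x = pos y \<Longrightarrow> x = y"
begin

abbreviation "E \<equiv> cE V pos dep"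

definition sp :: "int \<Rightarrow> nat" where "sp a = (SOME x. x \<in> V \<and> dep x = 0 \<and> pos x = a)"

lemma sp: "lo \<le> a \<Longrightarrow> a \<le> hi \<Longrightarrow> sp a \<in> V \<and> dep (sp a) = 0 \<and> pos (sp a) = a"
  proof -
  assume "lo \<le> a" "a \<le> hi"
  then have "\<exists>x. x \<in> V \<and> dep x = 0 \<and> pos x = a" using ex_sp[of a] by blast
  then show ?thesis unfolding sp_def by (rule someI_ex)
qed

lemma sp_eq: "x \<in> V \<Longrightarrow> dep x = 0 \<Longrightarrow> sp (pos x) = x"
  using sp[of "pos x"] bnd[of x] uniq by metis

lemma Esym: "E x y \<Longrightarrow> E y x"
  unfolding cE_def by auto

lemma simple: "simple_graph V E"
  unfolding simple_graph_def using finV by (auto simp: cE_def)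

lemma E_sp: "lo \<le> a \<Longrightarrow> a < hi \<Longrightarrow> E (sp a) (sp (a+1))"
  using sp[of a] sp[of "a+1"] unfolding cE_def by auto

lemma walk_up: "lo \<le> a \<Longrightarrow> a \<le> b \<Longrightarrow> b \<le> hi \<Longrightarrow> walk V E (map sp [a..b])"
  unfolding walk_def
proof (intro conjI allI impI)
  assume "lo \<le> a" "a \<le> b" "b \<le> hi"
  then show "map sp [a..b] \<noteq> []" by simp
  show "set (map sp [a..b]) \<subseteq> V" using sp \<open>lo \<le> a\<close> \<open>b \<le> hi\<close> by auto
  fix i assume "Suc i < length (map sp [a..b])"
  then have "a + int (Suc i) \<le> b" by simp
  moreover have eq: "a + int (Suc i) = a + int i + 1" by simp
  ultimately have n: "map sp [a..b] ! i = sp (a + int i)" "map sp [a..b] ! Suc i = sp (a + int i + 1)"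
    by (simp_all add: algebra_simps)
  have "E (sp (a + int i)) (sp (a + int i + 1))"
    using E_sp[of "a + int i"] \<open>lo \<le> a\<close> \<open>b \<le> hi\<close> \<open>a + int (Suc i) \<le> b\<close> by simp
  then show "E (map sp [a..b] ! i) (map sp [a..b] ! Suc i)" unfolding n .
qed

lemma walk_spine:
  assumes "lo \<le> a" "a \<le> hi" "lo \<le> b" "b \<le> hi"
  shows "\<exists>xs. walk V E xs \<and> hd xs = sp a \<and> last xs = sp b \<and> length xs = Suc (nat \<bar>a - b\<bar>)"
proof (cases "a \<le> b")
  case True
  have "hd (map sp [a..b]) = sp a" using True by (simp add: upto_rec1)
  moreover have "last (map sp [a..b]) = sp b" using True by (simp add: upto_rec2)
  ultimately show ?thesis using walk_up[of a b] assms True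
    by (intro exI[of _ "map sp [a..b]"]) auto
next
  case False
  have w: "walk V E (rev (map sp [b..a]))"
  proof (rule walk_rev)
    show "walk V E (map sp [b..a])" using walk_up[of b a] assms False by simp
    show "\<And>x y. E x y \<Longrightarrow> E y x" by (rule Esym)
  qed
  have "hd (rev (map sp [b..a])) = sp a" using False by (simp add: upto_rec2 hd_rev)
  moreover have "last (rev (map sp [b..a])) = sp b" using False by (simp add: upto_rec1 last_rev)
  ultimately show ?thesis using False w
    by (intro exI[of _ "rev (map sp [b..a])"]) auto
qed


lemma leaf_E: "x \<in> V \<Longrightarrow> dep x = 1 \<Longrightarrow> E x (sp (pos x))"
  using sp[of "pos x"] bnd[of x] unfolding cE_def by auto

lemma leaf_nb: "dep x = 1 \<Longrightarrow> E x w \<Longrightarrow> w = sp (pos x)"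
  using sp_eq[of w] unfolding cE_def by auto

lemma walk_between:
  assumes x: "x \<in> V" and y: "y \<in> V" and xy: "x \<noteq> y"
  shows "\<exists>xs. walk V E xs \<and> hd xs = x \<and> last xs = y \<and> length xs = Suc (cD pos dep x y)"
proof -
  obtain S where S: "walk V E S" "hd S = sp (pos x)" "last S = sp (pos y)"
    "length S = Suc (nat \<bar>pos x - pos y\<bar>)"
    using walk_spine[of "pos x" "pos y"] bnd[OF x] bnd[OF y] by blast
  have Sne: "S \<noteq> []" using S(1) by (simp add: walk_def)
  obtain L where L: "walk V E L" "hd L = x" "last L = sp (pos y)"
    "length L = Suc (nat \<bar>pos x - pos y\<bar> + dep x)"
  proof (cases "dep x = 0")
    case True
    then show ?thesis using that[of S] S sp_eq[OF x] by auto
  next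
    case False
    then have d: "dep x = 1" using bnd[OF x] by simp
    have e: "E (last [x]) (hd S)" using leaf_E[OF x d] S(2) by simp
    have "walk V E ([x] @ S)" by (rule walk_append[OF walk_single[OF x] S(1) e])
    then show ?thesis using that[of "x # S"] S d Sne by auto
  qed
  have Lne: "L \<noteq> []" using L(1) by (simp add: walk_def)
  show ?thesis
  proof (cases "dep y = 0")
    case True
    then show ?thesis using L sp_eq[OF y] xy by (intro exI[of _ L]) (auto simp: cD_def)
  next
    case False
    then have d: "dep y = 1" using bnd[OF y] by simp
    have e: "E (last L) (hd [y])" using Esym[OF leaf_E[OF y d]] L(3) by simp
    have "walk V E (L @ [y])" by (rule walk_append[OF L(1) walk_single[OF y] e])
    then show ?thesis using L d xy Lne by (intro exI[of _ "L @ [y]"]) (auto simp: cD_def)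
  qed
qed

lemma cD_step: "E y z \<Longrightarrow> cD pos dep x z \<le> cD pos dep x y + 1"
  unfolding cD_def cE_def by (auto split: if_splits)

lemma lower_aux: "walk V E xs \<Longrightarrow> k < length xs \<Longrightarrow> cD pos dep (xs ! 0) (xs ! k) \<le> k"
proof (induction k)
  case 0 then show ?case by (simp add: cD_def)
next
  case (Suc k)
  then have "E (xs ! k) (xs ! Suc k)" by (simp add: walk_def)
  then show ?case using Suc cD_step[of "xs ! k" "xs ! Suc k" "xs ! 0"] by simp
qed

lemma lower: "walk V E xs \<Longrightarrow> cD pos dep (hd xs) (last xs) \<le> length xs - 1"
  using lower_aux[of xs "length xs - 1"]
  by (simp add: walk_def hd_conv_nth last_conv_nth)

lemma gdist_eq:
  assumes "x \<in> V" "y \<in> V" "x \<noteq> y"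
  shows "gdist V E x y = enat (cD pos dep x y)"
proof -
  obtain xs where xs: "walk V E xs" "hd xs = x" "last xs = y" "length xs = Suc (cD pos dep x y)"
    using walk_between[OF assms] by blast
  have "(LEAST n. \<exists>xs. walk V E xs \<and> hd xs = x \<and> last xs = y \<and> length xs = Suc n) = cD pos dep x y"
  proof (rule Least_equality)
    show "\<exists>xs. walk V E xs \<and> hd xs = x \<and> last xs = y \<and> length xs = Suc (cD pos dep x y)"
      using xs by blast
  next
    fix n assume "\<exists>xs. walk V E xs \<and> hd xs = x \<and> last xs = y \<and> length xs = Suc n"
    then obtain ys where "walk V E ys" "hd ys = x" "last ys = y" "length ys = Suc n" by blast
    then show "cD pos dep x y \<le> n" using lower[of ys] by simp
  qed
  then show ?thesis unfolding gdist_def using xs by auto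
qed

lemma connected: "connected_graph V E"
  unfolding connected_graph_def
proof (intro conjI ballI)
  show "V \<noteq> {}" using sp[of lo] lohi by auto
next
  fix u v assume "u \<in> V" "v \<in> V"
  then show "\<exists>xs. walk V E xs \<and> hd xs = u \<and> last xs = v"
    using walk_between[of u v] walk_single[of u V E] by (cases "u = v") auto
qed

lemma cyc_nbrs:
  assumes c: "is_cycle V E xs" and i: "i < length xs"
  shows "\<exists>j k. j < length xs \<and> k < length xs \<and> j \<noteq> k \<and> E (xs ! i) (xs ! j) \<and> E (xs ! i) (xs ! k)"
proof -
  let ?n = "length xs"
  have n: "?n \<ge> 3" and w: "\<And>m. Suc m < ?n \<Longrightarrow> E (xs ! m) (xs ! Suc m)"
    and lh0: "E (last xs) (hd xs)" and ne: "xs \<noteq> []"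
    using c unfolding is_cycle_def walk_def by auto
  have lh: "E (xs ! (?n - 1)) (xs ! 0)" using lh0 ne by (simp add: hd_conv_nth last_conv_nth)
  consider "i = 0" | "i = ?n - 1" | "0 < i \<and> i < ?n - 1" using i by linarith
  then show ?thesis
  proof cases
    case 1
    have e1: "E (xs ! i) (xs ! 1)" using w[of 0] n 1 by simp
    have e2: "E (xs ! i) (xs ! (?n - 1))" using Esym[OF lh] 1 by simp
    have "1 < ?n" "?n - 1 < ?n" "(1::nat) \<noteq> ?n - 1" using n by linarith+
    then show ?thesis using e1 e2 by blast
  next
    case 2
    have "Suc (?n - 2) < ?n" using n by linarith
    then have "E (xs ! (?n - 2)) (xs ! Suc (?n - 2))" by (rule w)
    moreover have "Suc (?n - 2) = ?n - 1" using n by linarith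
    ultimately have e1: "E (xs ! i) (xs ! (?n - 2))" using Esym 2 by simp
    have e2: "E (xs ! i) (xs ! 0)" using lh 2 by simp
    have "?n - 2 < ?n" "0 < ?n" "?n - 2 \<noteq> 0" using n by linarith+
    then show ?thesis using e1 e2 by blast
  next
    case 3
    have "Suc (i - 1) < ?n" using 3 by linarith
    then have "E (xs ! (i - 1)) (xs ! Suc (i - 1))" by (rule w)
    moreover have "Suc (i - 1) = i" using 3 by linarith
    ultimately have e1: "E (xs ! i) (xs ! (i - 1))" using Esym by simp
    have "Suc i < ?n" using 3 by linarith
    then have e2: "E (xs ! i) (xs ! Suc i)" by (rule w)
    have "i - 1 < ?n" "Suc i < ?n" "i - 1 \<noteq> Suc i" using 3 by linarith+
    then show ?thesis using e1 e2 by blast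
  qed
qed

lemma no_cycle: "\<not> is_cycle V E xs"
proof
  assume c: "is_cycle V E xs"
  let ?n = "length xs"
  have dist: "distinct xs" and n: "?n \<ge> 3" and sV: "set xs \<subseteq> V"
    using c unfolding is_cycle_def walk_def by auto
  have inV: "xs ! i \<in> V" if "i < ?n" for i using sV that nth_mem by blast
  have spine: "dep (xs ! i) = 0" if i: "i < ?n" for i
  proof (rule ccontr)
    assume "dep (xs ! i) \<noteq> 0"
    moreover have "dep (xs ! i) \<le> 1" using bnd[OF inV[OF i]] by blast
    ultimately have d: "dep (xs ! i) = 1" by linarith
    obtain j k where jk: "j < ?n" "k < ?n" "j \<noteq> k" "E (xs ! i) (xs ! j)" "E (xs ! i) (xs ! k)"
      using cyc_nbrs[OF c i] by blast
    have "xs ! j = xs ! k" using leaf_nb[OF d jk(4)] leaf_nb[OF d jk(5)] by simp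
    then show False using dist jk(1-3) nth_eq_iff_index_eq by blast
  qed
  define m where "m = Max ((\<lambda>j. pos (xs ! j)) ` {..<?n})"
  have "0 < ?n" using n by linarith
  then have "0 \<in> {..<?n}" by (simp only: lessThan_iff)
  then have "m \<in> (\<lambda>j. pos (xs ! j)) ` {..<?n}" unfolding m_def by (intro Max_in) blast+
  then obtain i where i: "i < ?n" "pos (xs ! i) = m" by auto
  have mx: "pos (xs ! j) \<le> m" if "j < ?n" for j unfolding m_def using that by (intro Max_ge) auto
  obtain j k where jk: "j < ?n" "k < ?n" "j \<noteq> k" "E (xs ! i) (xs ! j)" "E (xs ! i) (xs ! k)"
    using cyc_nbrs[OF c i(1)] by blast
  have pm: "pos (xs ! j') = m - 1" if "j' < ?n" "E (xs ! i) (xs ! j')" for j'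
  proof -
    have "\<bar>pos (xs ! i) - pos (xs ! j')\<bar> = 1"
      using that(2) spine[OF i(1)] spine[OF that(1)] unfolding cE_def by simp
    then show ?thesis using mx[OF that(1)] i(2) by linarith
  qed
  have "xs ! j = xs ! k"
    by (rule uniq) (use inV jk spine pm in simp_all)
  then show False using dist jk(1-3) nth_eq_iff_index_eq by blast
qed

lemma tree: "is_tree V E"
  unfolding is_tree_def using simple connected no_cycle by blast

lemma deg_leaf: "x \<in> V \<Longrightarrow> dep x = 1 \<Longrightarrow> degree E x = 1"
proof -
  assume x: "x \<in> V" "dep x = 1"
  have "{w. E x w} = {sp (pos x)}"
  proof (rule set_eqI)
    fix w
    have "E x w \<longleftrightarrow> w = sp (pos x)"
    proof
      assume "E x w" then show "w = sp (pos x)" by (rule leaf_nb[OF x(2)])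
    next
      assume "w = sp (pos x)" then show "E x w" using leaf_E[OF x] by simp
    qed
    then show "w \<in> {w. E x w} \<longleftrightarrow> w \<in> {sp (pos x)}" by simp
  qed
  then show ?thesis by (simp add: degree_def)
qed

lemma deg_int: assumes "lo < a" "a < hi" shows "degree E (sp a) \<noteq> 1"
proof -
  have e1: "E (sp (a - 1)) (sp (a - 1 + 1))" using assms by (intro E_sp) auto
  have e2: "E (sp a) (sp (a + 1))" using assms by (intro E_sp) auto
  have e1': "E (sp a) (sp (a - 1))" using Esym[OF e1] by simp
  have sub: "{sp (a - 1), sp (a + 1)} \<subseteq> {w. E (sp a) w}"
    using e1' e2 by blast
  have fin: "finite {w. E (sp a) w}"
  proof (rule rev_finite_subset[OF finV])
    show "{w. E (sp a) w} \<subseteq> V" unfolding cE_def by blast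
  qed
  have p1: "pos (sp (a - 1)) = a - 1" using sp[of "a - 1"] assms by simp
  have p2: "pos (sp (a + 1)) = a + 1" using sp[of "a + 1"] assms by simp
  have "sp (a - 1) \<noteq> sp (a + 1)" using p1 p2 by auto
  then have c2: "card {sp (a - 1), sp (a + 1)} = 2" by simp
  have "card {sp (a - 1), sp (a + 1)} \<le> card {w. E (sp a) w}" by (rule card_mono[OF fin sub])
  then have "2 \<le> degree E (sp a)" unfolding degree_def c2 .
  then show ?thesis by linarith
qed

lemma E_spsp: "lo \<le> a \<Longrightarrow> a \<le> hi \<Longrightarrow> lo \<le> b \<Longrightarrow> b \<le> hi \<Longrightarrow> E (sp a) (sp b) \<longleftrightarrow> \<bar>a - b\<bar> = 1"
proof -
  assume r: "lo \<le> a" "a \<le> hi" "lo \<le> b" "b \<le> hi"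
  note A = sp[OF r(1,2)] and B = sp[OF r(3,4)]
  have ne: "sp a \<noteq> sp b \<longleftrightarrow> a \<noteq> b" using A B by metis
  show ?thesis unfolding cE_def using A B ne by auto
qed

lemma caterpillar: "caterpillar V E"
  unfolding caterpillar_def
proof (intro conjI tree)
  define S where "S = {a. lo \<le> a \<and> a \<le> hi \<and> degree E (sp a) \<noteq> 1}"
  define lo' where "lo' = (if degree E (sp lo) \<noteq> 1 then lo else lo + 1)"
  define hi' where "hi' = (if degree E (sp hi) \<noteq> 1 then hi else hi - 1)"
  have N: "{v \<in> V. degree E v \<noteq> 1} = sp ` S"
  proof (rule set_eqI, rule iffI)
    fix v assume "v \<in> {v \<in> V. degree E v \<noteq> 1}"
    then have v: "v \<in> V" "degree E v \<noteq> 1" by auto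
    then have "dep v = 0" using deg_leaf bnd[of v] by force
    then have "v = sp (pos v)" using sp_eq v by simp
    then show "v \<in> sp ` S" unfolding S_def using v bnd[of v] by (intro image_eqI[of _ _ "pos v"]) auto
  next
    fix v assume "v \<in> sp ` S"
    then show "v \<in> {v \<in> V. degree E v \<noteq> 1}" unfolding S_def using sp by auto
  qed
  have rng0: "lo \<le> lo'" "hi' \<le> hi" unfolding lo'_def hi'_def by auto
  have Seq: "S = {lo'..hi'}"
  proof (rule set_eqI)
    fix a
    show "a \<in> S \<longleftrightarrow> a \<in> {lo'..hi'}"
    proof
      assume "a \<in> S"
      then have a: "lo \<le> a" "a \<le> hi" "degree E (sp a) \<noteq> 1" unfolding S_def by auto
      have "lo' \<le> a"
      proof (cases "a = lo")
        case True then show ?thesis using a unfolding lo'_def by simp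
      next
        case False then show ?thesis using a unfolding lo'_def by simp
      qed
      moreover have "a \<le> hi'"
      proof (cases "a = hi")
        case True then show ?thesis using a unfolding hi'_def by simp
      next
        case False then show ?thesis using a unfolding hi'_def by simp
      qed
      ultimately show "a \<in> {lo'..hi'}" by simp
    next
      assume "a \<in> {lo'..hi'}"
      then have a: "lo' \<le> a" "a \<le> hi'" by auto
      then have b: "lo \<le> a" "a \<le> hi" using rng0 by linarith+
      have "degree E (sp a) \<noteq> 1"
      proof (cases "a = lo")
        case True
        then show ?thesis using a(1) unfolding lo'_def by (cases "degree E (sp lo) \<noteq> 1") simp_all
      next
        case F1: False
        show ?thesis
        proof (cases "a = hi")
          case True
          then show ?thesis using a(2) unfolding hi'_def by (cases "degree E (sp hi) \<noteq> 1") simp_all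
        next
          case False
          then show ?thesis using F1 b deg_int[of a] by linarith
        qed
      qed
      then show "a \<in> S" using b unfolding S_def by simp
    qed
  qed
  have rng: "lo \<le> lo'" "hi' \<le> hi" unfolding lo'_def hi'_def by auto
  show "induces_path E {v \<in> V. degree E v \<noteq> 1}"
    unfolding induces_path_def N Seq
  proof (intro exI[of _ "map sp [lo'..hi']"] conjI allI impI)
    have "inj_on sp {lo'..hi'}"
      by (rule inj_onI) (metis atLeastAtMost_iff rng sp order_trans)
    then show "distinct (map sp [lo'..hi'])" by (simp add: distinct_map)
    show "set (map sp [lo'..hi']) = sp ` {lo'..hi'}" by simp
  next
    fix i j assume ij: "i < length (map sp [lo'..hi'])" "j < length (map sp [lo'..hi'])"
    then have e: "map sp [lo'..hi'] ! i = sp (lo' + int i)" "map sp [lo'..hi'] ! j = sp (lo' + int j)"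
      by auto
    have "E (sp (lo' + int i)) (sp (lo' + int j)) \<longleftrightarrow> \<bar>(lo' + int i) - (lo' + int j)\<bar> = 1"
      using ij rng by (intro E_spsp) auto
    also have "\<dots> \<longleftrightarrow> (i = Suc j \<or> j = Suc i)" by auto
    finally show "E (map sp [lo'..hi'] ! i) (map sp [lo'..hi'] ! j) \<longleftrightarrow> (i = Suc j \<or> j = Suc i)"
      unfolding e .
  qed
qed

end



locale seqs =
  fixes s :: "nat \<Rightarrow> nat" and l :: nat
  assumes l1: "l \<ge> 1"
    and inc: "\<forall>i\<in>{2..l}. s (i - 1) < s i"
    and s1: "s 1 = 1"
    and gap: "\<forall>i\<in>{2..l}. s i - s (i - 1) \<le> 2"
begin

lemma smono: "1 \<le> i \<Longrightarrow> i \<le> j \<Longrightarrow> j \<le> l \<Longrightarrow> s i + (j - i) \<le> s j"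
proof (induction j)
  case 0 then show ?case by simp
next
  case (Suc j)
  show ?case
  proof (cases "i = Suc j")
    case True then show ?thesis by simp
  next
    case False
    then have ij: "i \<le> j" using Suc by simp
    then have "s i + (j - i) \<le> s j" using Suc by simp
    moreover have "s j < s (Suc j)" using inc Suc ij by (metis atLeastAtMost_iff diff_Suc_1 le_trans not_less_eq_eq one_add_one plus_1_eq_Suc Suc_le_mono)
    ultimately show ?thesis using ij by linarith
  qed
qed

lemma sge: "1 \<le> k \<Longrightarrow> k \<le> l \<Longrightarrow> k \<le> s k"
  using smono[of 1 k] s1 by simp

lemma sgap: "1 \<le> k \<Longrightarrow> k < l \<Longrightarrow> s (Suc k) \<le> s k + 2"
  using gap by (metis Suc_le_mono atLeastAtMost_iff diff_Suc_1 le_diff_conv add.commute one_add_one plus_1_eq_Suc Suc_leI)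

lemma sinc: "1 \<le> k \<Longrightarrow> k < l \<Longrightarrow> s k < s (Suc k)"
  using smono[of k "Suc k"] by simp

definition spu :: "nat \<Rightarrow> bool" where "spu k \<longleftrightarrow> k < l \<and> s (Suc k) = s k + 2"

definition idx :: "nat \<Rightarrow> nat" where "idx v = (if v < l then v + 1 else v - l + 1)"

definition Vc :: "nat set" where "Vc = {..<2 * l}"

definition posc :: "nat \<Rightarrow> int" where
  "posc v = (if v < l then int v else int (idx v) - int (s (idx v)) - (if spu (idx v) then 1 else 0))"

definition depc :: "nat \<Rightarrow> nat" where
  "depc v = (if v < l then 0 else if spu (idx v) then 0 else 1)"

definition loc :: int where "loc = int l - int (s l)"
definition hic :: int where "hic = int l - 1"

lemma idx_rng: "v < 2 * l \<Longrightarrow> 1 \<le> idx v \<and> idx v \<le> l"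
  unfolding idx_def by auto

lemma ex_step: "1 \<le> m \<Longrightarrow> m \<le> l \<Longrightarrow> 0 \<le> c \<Longrightarrow> c < int (s m) - int m \<Longrightarrow>
  \<exists>k. 1 \<le> k \<and> k < m \<and> int (s k) - int k = c \<and> spu k"
proof (induction m arbitrary: c)
  case 0 then show ?case by simp
next
  case (Suc m)
  show ?case
  proof (cases "m = 0")
    case True then show ?thesis using Suc s1 by simp
  next
    case False
    then have m: "1 \<le> m" "m < l" using Suc by auto
    have g: "s (Suc m) \<le> s m + 2" "s m < s (Suc m)" using sgap[OF m] sinc[OF m] by auto
    show ?thesis
    proof (cases "c < int (s m) - int m")
      case True
      then obtain k where "1 \<le> k \<and> k < m \<and> int (s k) - int k = c \<and> spu k"
        using Suc.IH[of c] m Suc.prems by auto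
      then show ?thesis by (intro exI[of _ k]) auto
    next
      case False
      then have "int (s m) - int m = c" "s (Suc m) = s m + 2" using Suc.prems g by linarith+
      then show ?thesis using m unfolding spu_def by (intro exI[of _ m]) auto
    qed
  qed
qed

lemma cat_inst: "cat Vc posc depc loc hic"
proof
  show "finite Vc" unfolding Vc_def by simp
  have sl: "l \<le> s l" using sge[of l] l1 by simp
  show "loc \<le> hic" unfolding loc_def hic_def using sl l1 by linarith
next
  fix x assume x: "x \<in> Vc"
  have sl: "l \<le> s l" using sge[of l] l1 by simp
  show "depc x \<le> 1 \<and> loc \<le> posc x \<and> posc x \<le> hic"
  proof (cases "x < l")
    case True then show ?thesis using sl unfolding depc_def posc_def loc_def hic_def by auto
  next
    case False
    define k where "k = idx x"
    have k: "1 \<le> k" "k \<le> l" using idx_rng[of x] x unfolding Vc_def k_def by auto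
    have sk: "k \<le> s k" using sge k by blast
    have m1: "s k + (l - k) \<le> s l" using smono[of k l] k by simp
    show ?thesis
    proof (cases "spu k")
      case True
      then have kl: "k < l" and e: "s (Suc k) = s k + 2" unfolding spu_def by auto
      have "s (Suc k) + (l - Suc k) \<le> s l" using smono[of "Suc k" l] kl by simp
      then show ?thesis using False True sk kl e unfolding depc_def posc_def loc_def hic_def k_def[symmetric]
        by (simp; linarith)
    next
      case F2: False
      then show ?thesis using False sk m1 k unfolding depc_def posc_def loc_def hic_def k_def[symmetric]
        by (simp; linarith)
    qed
  qed
next
  fix a assume a: "loc \<le> a" "a \<le> hic"
  show "\<exists>x\<in>Vc. depc x = 0 \<and> posc x = a"
  proof (cases "0 \<le> a")
    case True
    then show ?thesis using a unfolding Vc_def depc_def posc_def hic_def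
      by (intro bexI[of _ "nat a"]) auto
  next
    case False
    obtain k where k: "1 \<le> k" "k < l" "int (s k) - int k = - a - 1" "spu k"
      using ex_step[of l "- a - 1"] l1 False a unfolding loc_def by auto
    define x where "x = l + k - 1"
    have ix: "idx x = k" "\<not> x < l" using k unfolding x_def idx_def by auto
    show ?thesis using k ix unfolding Vc_def depc_def posc_def
      by (intro bexI[of _ x]) (auto simp: x_def)
  qed
next
  fix x y assume x: "x \<in> Vc" and y: "y \<in> Vc" and dx: "depc x = 0" and dy: "depc y = 0"
    and p: "posc x = posc y"
  have neg: "posc v < 0 \<and> spu (idx v)" if "\<not> v < l" "depc v = 0" "v \<in> Vc" for v
  proof -
    have "spu (idx v)" using that unfolding depc_def by (auto split: if_splits)
    moreover have "idx v \<le> s (idx v)" using sge idx_rng[of v] that unfolding Vc_def by auto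
    ultimately show ?thesis using that unfolding posc_def by auto
  qed
  show "x = y"
  proof (cases "x < l")
    case True
    show ?thesis
    proof (cases "y < l")
      case True
      then show ?thesis using \<open>x < l\<close> p unfolding posc_def by simp
    next
      case False
      have "posc x = int x" using \<open>x < l\<close> by (simp add: posc_def)
      then show ?thesis using neg[OF False dy y] p by linarith
    qed
  next
    case False
    show ?thesis
    proof (cases "y < l")
      case True
      have "posc y = int y" using True by (simp add: posc_def)
      then show ?thesis using neg[OF False dx x] p by linarith
    next
      case F2: False
      have sx: "spu (idx x)" and sy: "spu (idx y)" using neg F2 False x y dx dy by auto
      have ix: "1 \<le> idx x" "idx x \<le> l" and iy: "1 \<le> idx y" "idx y \<le> l"
        using idx_rng x y unfolding Vc_def by auto
      have t: "int (s (idx x)) - int (idx x) = int (s (idx y)) - int (idx y)"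
        using p sx sy False F2 unfolding posc_def by simp
      have noless: False if "i < j" "1 \<le> i" "j \<le> l" "spu i" "int (s i) - int i = int (s j) - int j" for i j
      proof -
        have "s (Suc i) + (j - Suc i) \<le> s j" using smono[of "Suc i" j] that by simp
        moreover have "s (Suc i) = s i + 2" using that(4) unfolding spu_def by simp
        ultimately show False using that by linarith
      qed
      have "idx x = idx y"
        using noless[of "idx x" "idx y"] noless[of "idx y" "idx x"] ix iy sx sy t
        by (metis linorder_neqE_nat)
      then show ?thesis using False F2 unfolding idx_def by simp
    qed
  qed
qed


definition fc :: "nat \<Rightarrow> nat" where "fc v = s (idx v)"

lemma sinj: "1 \<le> i \<Longrightarrow> i \<le> l \<Longrightarrow> 1 \<le> j \<Longrightarrow> j \<le> l \<Longrightarrow> s i = s j \<Longrightarrow> i = j"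
proof -
  assume a: "1 \<le> i" "i \<le> l" "1 \<le> j" "j \<le> l" "s i = s j"
  show "i = j"
  proof (rule linorder_cases[of i j])
    assume lt: "i < j"
    have "s i + (j - i) \<le> s j" using smono[of i j] a lt by simp
    then show ?thesis using lt a by linarith
  next
    assume lt: "j < i"
    have "s j + (i - j) \<le> s i" using smono[of j i] a lt by simp
    then show ?thesis using lt a by linarith
  qed
qed

lemma vert: "v \<in> Vc \<Longrightarrow> idx v = k \<Longrightarrow> v = k - 1 \<and> v < l \<or> v = l + k - 1 \<and> \<not> v < l"
  unfolding idx_def Vc_def by (cases "v < l") auto

lemma pairD: assumes "1 \<le> k" "k \<le> l" shows "cD posc depc (k - 1) (l + k - 1) = s k"
proof -
  have i1: "idx (k - 1) = k" "k - 1 < l" using assms unfolding idx_def by auto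
  have i2: "idx (l + k - 1) = k" "\<not> l + k - 1 < l" using assms unfolding idx_def by auto
  have ne: "k - 1 \<noteq> l + k - 1" using assms by auto
  have sk: "k \<le> s k" using sge assms by blast
  have p1: "posc (k - 1) = int k - 1" "depc (k - 1) = 0" using i1 assms unfolding posc_def depc_def by auto
  show ?thesis
  proof (cases "spu k")
    case True
    then have "posc (l + k - 1) = int k - int (s k) - 1" "depc (l + k - 1) = 0"
      using i2 unfolding posc_def depc_def by auto
    then show ?thesis using p1 ne sk unfolding cD_def by simp
  next
    case False
    then have "posc (l + k - 1) = int k - int (s k)" "depc (l + k - 1) = 1"
      using i2 unfolding posc_def depc_def by auto
    then show ?thesis using p1 ne sk assms unfolding cD_def by simp
  qed
qed

lemma cD_sym: "cD pos dep x y = cD pos dep y x"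
  unfolding cD_def by (simp add: abs_minus_commute)

lemma main:
  "simple_graph Vc (cE Vc posc depc) \<and> caterpillar Vc (cE Vc posc depc) \<and> card Vc = 2 * l \<and>
   distance_labeling Vc (cE Vc posc depc) (s ` {1..l}) fc \<and>
   (\<forall>k\<in>s ` {1..l}. card {v\<in>Vc. fc v = k} = 2)"
proof -
  interpret C: cat Vc posc depc loc hic by (rule cat_inst)
  have img: "fc ` Vc = s ` {1..l}"
  proof
    show "fc ` Vc \<subseteq> s ` {1..l}" unfolding fc_def using idx_rng unfolding Vc_def by auto
    show "s ` {1..l} \<subseteq> fc ` Vc"
    proof
      fix y assume "y \<in> s ` {1..l}"
      then obtain k where k: "1 \<le> k" "k \<le> l" "y = s k" by auto
      then have "k - 1 \<in> Vc" "fc (k - 1) = y" unfolding Vc_def fc_def idx_def by auto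
      then show "y \<in> fc ` Vc" by blast
    qed
  qed
  have fib: "{v\<in>Vc. fc v = s k} = {k - 1, l + k - 1}" if k: "1 \<le> k" "k \<le> l" for k
  proof (rule set_eqI, rule iffI)
    fix v assume "v \<in> {v\<in>Vc. fc v = s k}"
    then have v: "v \<in> Vc" "s (idx v) = s k" unfolding fc_def by auto
    then have "idx v = k" using sinj idx_rng[of v] k unfolding Vc_def by auto
    then show "v \<in> {k - 1, l + k - 1}" using vert[OF v(1)] by auto
  next
    fix v assume "v \<in> {k - 1, l + k - 1}"
    moreover have "idx (k - 1) = k" "idx (l + k - 1) = k" using k unfolding idx_def by auto
    ultimately show "v \<in> {v\<in>Vc. fc v = s k}" using k unfolding Vc_def fc_def by auto
  qed
  have dl: "distance_labeling Vc (cE Vc posc depc) (s ` {1..l}) fc"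
    unfolding distance_labeling_def
  proof (intro conjI img ballI impI)
    fix u v assume u: "u \<in> Vc" and v: "v \<in> Vc" and uv: "u \<noteq> v \<and> fc u = fc v"
    define k where "k = idx u"
    have k: "1 \<le> k" "k \<le> l" using idx_rng u unfolding k_def Vc_def by auto
    have "idx v = k" using uv sinj idx_rng[of u] idx_rng[of v] u v unfolding k_def fc_def Vc_def by auto
    then have "u \<in> {k - 1, l + k - 1}" "v \<in> {k - 1, l + k - 1}"
      using vert[OF u] vert[OF v] k_def by auto
    then have "(u = k - 1 \<and> v = l + k - 1) \<or> (v = k - 1 \<and> u = l + k - 1)" using uv by auto
    then have "cD posc depc u v = s k" using pairD[OF k] cD_sym by metis
    moreover have "fc u = s k" unfolding fc_def k_def by simp
    ultimately show "gdist Vc (cE Vc posc depc) u v = enat (fc u)" using C.gdist_eq u v uv by simp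
  qed
  have card: "card Vc = 2 * l" unfolding Vc_def by simp
  have cards: "\<forall>k\<in>s ` {1..l}. card {v\<in>Vc. fc v = k} = 2"
  proof
    fix y assume "y \<in> s ` {1..l}"
    then obtain k where k: "1 \<le> k" "k \<le> l" "y = s k" by auto
    have "k - 1 \<noteq> l + k - 1" using k by auto
    then show "card {v\<in>Vc. fc v = y} = 2" using fib[OF k(1,2)] k(3) by simp
  qed
  show ?thesis using C.simple C.caterpillar card dl cards by blast
qed

end

theorem mainTheorem8:
  fixes s :: "nat \<Rightarrow> nat" and l :: nat
  assumes "l \<ge> 1"
    and "\<forall>i\<in>{2..l}. s (i - 1) < s i"
    and "s 1 = 1"
    and "\<forall>i\<in>{2..l}. s i - s (i - 1) \<le> 2"
  shows "delta_set (s ` {1..l}) \<and>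
    (\<exists>(V::nat set) E f. caterpillar V E \<and> card V = 2 * l \<and>
        distance_labeling V E (s ` {1..l}) f \<and>
        (\<forall>k\<in>s ` {1..l}. card {v\<in>V. f v = k} = 2))"
proof -
  interpret seqs s l using assms by unfold_locales
  note M = main
  have proper: "proper_distance_labeling Vc (cE Vc posc depc) (s ` {1..l}) fc"
    unfolding proper_distance_labeling_def
  proof (intro conjI ballI)
    show "distance_labeling Vc (cE Vc posc depc) (s ` {1..l}) fc" using M by blast
  next
    fix k assume "k \<in> s ` {1..l} - {0}"
    then have k: "k \<in> s ` {1..l}" by simp
    then have c: "card {v\<in>Vc. fc v = k} = 2" using M by blast
    then obtain u v where "{v\<in>Vc. fc v = k} = {u, v}" "u \<noteq> v" by (meson card_2_iff)
    then show "\<exists>u\<in>Vc. \<exists>v\<in>Vc. u \<noteq> v \<and> fc u = k \<and> fc v = k" by blast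
  qed
  have "delta_set (s ` {1..l})"
    unfolding delta_set_def using M proper by blast
  then show ?thesis using M by blast
qed


end
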